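(* Let $\mu$ be a distribution on $\mathbb{R}$ with finite second moment and a log-concave density $\varphi$, let $X$ have distribution $\mu$, and let $I$ be the closed interval $\overline{\{\varphi>0\}}$ with endpoints $a<b$, $a,b\in\overline{\mathbb{R}}$. Define on $I$ $$\mathcal{G}(x)=\mathbb{E}\big(|X-a|^2\wedge|X-b|^2\wedge|X-x|^2\big),$$ where a term involving an infinite endpoint is omitted. Let $F_\mu(y)=\mu((-\infty,y])$ and $K_\mu(y)=\int_{(-\infty,y]}\xi\,\mu(d\xi)$, with the conventions $(\pm\infty+x)/2=\pm\infty$ and $F_\mu,K_\mu$ extended at $\pm\infty$ by their limits, and set $$\Phi(x)=\frac{K_\mu\big(\frac{b+x}2\big)-K_\mu\big(\frac{a+x}2\big)}{F_\mu\big(\frac{b+x}2\big)-F_\mu\big(\frac{a+x}2\big)},\quad x\in I.$$ (a) $\mathcal{G}$ is differentiable on $I$ with $\mathcal{G}'(x)=2\int_{\frac{a+x}2}^{\frac{x+b}2}(x-\xi)\,\mu(d\xi)$, and $\operatorname{argmin}_I\mathcal{G}$ consists of a single point $x^*$, which is the unique stationary point of $\mathcal{G}$ on $I$ and satisfies $x^*=\Phi(x^* )$. (b) For every $x_0\in I$, the sequence defined by $x_{n+1}=\Phi(x_n)$, $n\ge0$, converges to $x^*$.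
   Context: Log-concave means $\log\varphi$ is concave (value $-\infty$ allowed where $\varphi=0$). *)

theory Defs
  imports "HOL-Analysis.Analysis"
begin

text \<open>Log-concavity: log phi is concave (with value -infinity where phi = 0),
  written out multiplicatively.\<close>
definition log_concave :: "(real \<Rightarrow> real) \<Rightarrow> bool" where
  "log_concave \<phi> \<longleftrightarrow> (\<forall>x. 0 \<le> \<phi> x) \<and>
     (\<forall>x y t. 0 < t \<and> t < 1 \<longrightarrow>
        \<phi> x powr (1 - t) * \<phi> y powr t \<le> \<phi> ((1 - t) * x + t * y))"

text \<open>Squared distance to an endpoint; infinite for an infinite endpoint
  (so that the corresponding term drops out of the minimum).\<close>
definition sqd_end :: "ereal \<Rightarrow> real \<Rightarrow> ereal" where
  "sqd_end e \<xi> = (if \<bar>e\<bar> = \<infinity> then \<infinity> else ereal ((\<xi> - real_of_ereal e)\<^sup>2))"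

definition calG :: "real measure \<Rightarrow> ereal \<Rightarrow> ereal \<Rightarrow> real \<Rightarrow> real" where
  "calG \<mu> a b x = (\<integral>\<xi>. real_of_ereal
      (min (min (sqd_end a \<xi>) (sqd_end b \<xi>)) (ereal ((\<xi> - x)\<^sup>2))) \<partial>\<mu>)"

definition Fext :: "real measure \<Rightarrow> ereal \<Rightarrow> real" where
  "Fext \<mu> y = (if y = -\<infinity> then 0 else if y = \<infinity> then 1
                else measure \<mu> {..real_of_ereal y})"

definition Kext :: "real measure \<Rightarrow> ereal \<Rightarrow> real" where
  "Kext \<mu> y = (if y = -\<infinity> then 0 else if y = \<infinity> then (\<integral>\<xi>. \<xi> \<partial>\<mu>)
                else (LINT \<xi>:{..real_of_ereal y}|\<mu>. \<xi>))"

definition Phi :: "real measure \<Rightarrow> ereal \<Rightarrow> ereal \<Rightarrow> real \<Rightarrow> real" where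
  "Phi \<mu> a b x =
     (Kext \<mu> ((b + ereal x) / 2) - Kext \<mu> ((a + ereal x) / 2)) /
     (Fext \<mu> ((b + ereal x) / 2) - Fext \<mu> ((a + ereal x) / 2))"

end

theory Submission
  imports Defs "HOL-Analysis.Analysis"
begin

locale LC =
  fixes \<mu> :: "real measure" and \<phi> :: "real \<Rightarrow> real" and a b :: ereal
  assumes phi_meas[measurable]: "\<phi> \<in> borel_measurable borel"
    and lc: "log_concave \<phi>"
    and mu_def: "\<mu> = density lborel (\<lambda>x. ennreal (\<phi> x))"
    and prob: "emeasure \<mu> (space \<mu>) = 1"
    and second_moment: "integrable \<mu> (\<lambda>x. x\<^sup>2)"
    and I_cl: "closure {x. \<phi> x > 0} = {x. a \<le> ereal x \<and> ereal x \<le> b}"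
    and ab: "a < b"
begin

definition "I = {x. a \<le> ereal x \<and> ereal x \<le> b}"
definition "J = {x. a < ereal x \<and> ereal x < b}"
definition "W x = {\<xi>. a < ereal (2*\<xi> - x) \<and> ereal (2*\<xi> - x) < b}"
definition M0 :: "real set \<Rightarrow> real" where "M0 S = (\<integral>\<xi>. indicator S \<xi> \<partial>\<mu>)"
definition M1 :: "real set \<Rightarrow> real" where "M1 S = (\<integral>\<xi>. indicator S \<xi> * \<xi> \<partial>\<mu>)"

lemma sets_mu[measurable_cong]: "sets \<mu> = sets borel"
  by (simp add: mu_def)

lemma space_mu[simp]: "space \<mu> = UNIV"
  by (simp add: mu_def)

lemma fin_mu: "finite_measure \<mu>"
  using prob by (intro finite_measureI) auto

lemma phi_nonneg: "0 \<le> \<phi> x"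
  using lc by (auto simp: log_concave_def)

lemma a_ne: "a \<noteq> \<infinity>" using ab by auto
lemma b_ne: "b \<noteq> -\<infinity>" using ab by auto

lemma int_id: "integrable \<mu> (\<lambda>x. x)"
proof (rule Bochner_Integration.integrable_bound[where f="\<lambda>x. 1 + x\<^sup>2"])
  show "integrable \<mu> (\<lambda>x. 1 + x\<^sup>2)"
    using second_moment finite_measure.integrable_const[OF fin_mu] by (intro Bochner_Integration.integrable_add) auto
  show "AE x in \<mu>. norm x \<le> norm (1 + x\<^sup>2)"
  proof (intro AE_I2)
    fix x :: real
    have "0 \<le> (\<bar>x\<bar> - 1)\<^sup>2" by simp
    then have "\<bar>x\<bar> \<le> 1 + x\<^sup>2" by (simp add: power2_eq_square algebra_simps abs_mult_self_eq) 
    then show "norm x \<le> norm (1 + x\<^sup>2)" by simp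
  qed
qed auto

lemma int_const: "integrable \<mu> (\<lambda>x. c)"
  using finite_measure.integrable_const[OF fin_mu] .

lemma W_meas[measurable]: "W x \<in> sets borel"
  unfolding W_def by measurable

lemma W_eq: "{\<xi>. (a + ereal x) / 2 < ereal \<xi> \<and> ereal \<xi> < (ereal x + b) / 2} = W x"
proof -
  have 1: "(a + ereal x) / 2 < ereal \<xi> \<longleftrightarrow> a < ereal (2*\<xi> - x)" for \<xi>
    using a_ne by (cases a) (auto simp: field_simps)
  have 2: "ereal \<xi> < (ereal x + b) / 2 \<longleftrightarrow> ereal (2*\<xi> - x) < b" for \<xi>
    using b_ne by (cases b) (auto simp: field_simps)
  show ?thesis unfolding W_def using 1 2 by auto
qed

definition "hh \<xi> y = real_of_ereal (min (min (sqd_end a \<xi>) (sqd_end b \<xi>)) (ereal ((\<xi> - y)\<^sup>2)))"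
definition "D x = (\<integral>\<xi>. indicator (W x) \<xi> * (2*(x-\<xi>)) \<partial>\<mu>)"

lemma G_eq: "calG \<mu> a b y = (\<integral>\<xi>. hh \<xi> y \<partial>\<mu>)"
  unfolding calG_def hh_def ..

lemma sqd_nonneg: "0 \<le> sqd_end e \<xi>"
  by (simp add: sqd_end_def)

lemma min_form: "0 \<le> A \<Longrightarrow> 0 \<le> q \<Longrightarrow>
   real_of_ereal (min A (ereal q)) = (if A = \<infinity> then q else min (real_of_ereal A) q)"
  by (cases A) (auto simp: min_def)

lemma hh_meas[measurable]: "(\<lambda>\<xi>. hh \<xi> y) \<in> borel_measurable borel"
  unfolding hh_def sqd_end_def by measurable

lemma hh_nonneg: "0 \<le> hh \<xi> y"
  unfolding hh_def by (simp add: real_of_ereal_pos sqd_nonneg)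

lemma hh_le: "hh \<xi> y \<le> (\<xi> - y)\<^sup>2"
proof -
  have "0 \<le> min (sqd_end a \<xi>) (sqd_end b \<xi>)" by (simp add: sqd_nonneg)
  then show ?thesis unfolding hh_def by (subst min_form) auto
qed

lemma sqd_ge_in:
  assumes x: "x \<in> I" and xi: "\<xi> \<in> W x"
  shows "ereal ((\<xi> - x)\<^sup>2) \<le> sqd_end a \<xi>" "ereal ((\<xi> - x)\<^sup>2) \<le> sqd_end b \<xi>"
proof -
  have h: "a \<le> ereal x" "ereal x \<le> b" "a < ereal (2*\<xi> - x)" "ereal (2*\<xi> - x) < b"
    using x xi by (auto simp: I_def W_def)
  show "ereal ((\<xi> - x)\<^sup>2) \<le> sqd_end a \<xi>"
  proof (cases a)
    case (real r)
    with h have "r \<le> x" "r < 2*\<xi> - x" by auto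
    then have "0 \<le> (x - r) * (2*\<xi> - r - x)" by simp
    then have "(\<xi> - x)\<^sup>2 \<le> (\<xi> - r)\<^sup>2" by (simp add: power2_eq_square algebra_simps)
    then show ?thesis using real by (simp add: sqd_end_def)
  qed (auto simp: sqd_end_def)
  show "ereal ((\<xi> - x)\<^sup>2) \<le> sqd_end b \<xi>"
  proof (cases b)
    case (real r)
    with h have "x \<le> r" "2*\<xi> - x < r" by auto
    then have "0 \<le> (r - x) * (r + x - 2*\<xi>)" by simp
    then have "(\<xi> - x)\<^sup>2 \<le> (\<xi> - r)\<^sup>2" by (simp add: power2_eq_square algebra_simps)
    then show ?thesis using real by (simp add: sqd_end_def)
  qed (auto simp: sqd_end_def)
qed

lemma hh_in: "x \<in> I \<Longrightarrow> \<xi> \<in> W x \<Longrightarrow> hh \<xi> x = (\<xi> - x)\<^sup>2"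
  using sqd_ge_in[of x \<xi>] unfolding hh_def by (simp add: min_def)

lemma hh_out:
  assumes x: "x \<in> I" and xi: "\<xi> \<notin> W x"
  shows "hh \<xi> y \<le> hh \<xi> x"
proof -
  define A where "A = min (sqd_end a \<xi>) (sqd_end b \<xi>)"
  have h: "a \<le> ereal x" "ereal x \<le> b" using x by (auto simp: I_def)
  have A0: "0 \<le> A" unfolding A_def by (simp add: sqd_nonneg)
  have "\<exists>r. A \<le> ereal r \<and> r \<le> (\<xi> - x)\<^sup>2"
  proof (cases "a < ereal (2*\<xi> - x)")
    case True
    with xi have nb: "\<not> ereal (2*\<xi> - x) < b" by (auto simp: W_def)
    then obtain r where r: "b = ereal r" using b_ne by (cases b) auto
    with nb h have "x \<le> r" "r \<le> 2*\<xi> - x" by (auto simp: I_def)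
    then have "0 \<le> (r - x) * (2*\<xi> - x - r)" by simp
    then have "(\<xi> - r)\<^sup>2 \<le> (\<xi> - x)\<^sup>2" by (simp add: power2_eq_square algebra_simps)
    moreover have "A \<le> ereal ((\<xi> - r)\<^sup>2)" using r by (simp add: A_def sqd_end_def)
    ultimately show ?thesis by blast
  next
    case False
    then obtain r where r: "a = ereal r" using a_ne by (cases a) auto
    with False h have "r \<le> x" "2*\<xi> - x \<le> r" by (auto simp: I_def)
    then have "0 \<le> (x - r) * (r + x - 2*\<xi>)" by simp
    then have "(\<xi> - r)\<^sup>2 \<le> (\<xi> - x)\<^sup>2" by (simp add: power2_eq_square algebra_simps)
    moreover have "A \<le> ereal ((\<xi> - r)\<^sup>2)" using r by (simp add: A_def sqd_end_def)
    ultimately show ?thesis by blast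
  qed
  then obtain r where r: "A \<le> ereal r" "r \<le> (\<xi> - x)\<^sup>2" by blast
  have "A \<noteq> \<infinity>" using r by auto
  then show ?thesis using A0 r unfolding hh_def A_def[symmetric]
    by (subst min_form, simp_all)+ (cases A, auto)
qed

lemma int_sq: "integrable \<mu> (\<lambda>\<xi>. (\<xi> - y)\<^sup>2)"
proof -
  have "integrable \<mu> (\<lambda>\<xi>. \<xi>\<^sup>2 - 2*y*\<xi> + y\<^sup>2)"
    using second_moment int_id int_const by (intro Bochner_Integration.integrable_add Bochner_Integration.integrable_diff integrable_mult_right) auto
  then show ?thesis by (simp add: power2_eq_square algebra_simps)
qed

lemma int_hh: "integrable \<mu> (\<lambda>\<xi>. hh \<xi> y)"
  by (rule Bochner_Integration.integrable_bound[OF int_sq[of y]]) (auto intro!: AE_I2 simp: hh_nonneg hh_le)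

lemma int_ind: fixes f :: "real \<Rightarrow> real" shows "integrable \<mu> f \<Longrightarrow> integrable \<mu> (\<lambda>\<xi>. indicator (W x) \<xi> * f \<xi>)"
  using integrable_mult_indicator[of "W x" \<mu> f] by simp

lemma G_bound:
  assumes x: "x \<in> I"
  shows "calG \<mu> a b y - calG \<mu> a b x \<le> (y - x) * D x + (y - x)\<^sup>2"
proof -
  have "integrable \<mu> (\<lambda>\<xi>. 2*(x-\<xi>))" using int_id int_const by (intro integrable_mult_right Bochner_Integration.integrable_diff) auto
  then have i1: "integrable \<mu> (\<lambda>\<xi>. indicator (W x) \<xi> * (2*(x-\<xi>)))" by (rule int_ind)
  have i2: "integrable \<mu> (indicator (W x) :: real \<Rightarrow> real)" using int_ind[OF int_const[of 1], of x] by simp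
  note int_indW = i1 i2
  have "calG \<mu> a b y - calG \<mu> a b x = (\<integral>\<xi>. hh \<xi> y - hh \<xi> x \<partial>\<mu>)"
    unfolding G_eq using int_hh by simp
  also have "\<dots> \<le> (\<integral>\<xi>. (y - x) * (indicator (W x) \<xi> * (2*(x-\<xi>))) + (y-x)\<^sup>2 * indicator (W x) \<xi> \<partial>\<mu>)"
  proof (rule integral_mono)
    show "integrable \<mu> (\<lambda>\<xi>. hh \<xi> y - hh \<xi> x)" using int_hh by simp
    show "integrable \<mu> (\<lambda>\<xi>. (y - x) * (indicator (W x) \<xi> * (2*(x-\<xi>))) + (y-x)\<^sup>2 * indicator (W x) \<xi>)"
      using int_indW by (intro Bochner_Integration.integrable_add integrable_mult_right) auto
    fix \<xi>
    show "hh \<xi> y - hh \<xi> x \<le> (y - x) * (indicator (W x) \<xi> * (2*(x-\<xi>))) + (y-x)\<^sup>2 * indicator (W x) \<xi>"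
    proof (cases "\<xi> \<in> W x")
      case True
      then have "hh \<xi> y - hh \<xi> x \<le> (\<xi> - y)\<^sup>2 - (\<xi> - x)\<^sup>2" using hh_in[OF x True] hh_le[of \<xi> y] by simp
      also have "\<dots> = (y - x) * (2*(x-\<xi>)) + (y-x)\<^sup>2" by (simp add: power2_eq_square algebra_simps)
      finally show ?thesis using True by simp
    next
      case False
      then show ?thesis using hh_out[OF x False, of y] by simp
    qed
  qed
  also have "\<dots> = (y - x) * D x + (y-x)\<^sup>2 * M0 (W x)"
    unfolding D_def M0_def
    using int_indW by (subst Bochner_Integration.integral_add) (auto intro!: integrable_mult_right)
  also have "\<dots> \<le> (y - x) * D x + (y-x)\<^sup>2"
  proof -
    have "M0 (W x) \<le> 1"
    proof -
      have "M0 (W x) = measure \<mu> (W x)" unfolding M0_def by simp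
      also have "\<dots> \<le> measure \<mu> (space \<mu>)"
        by (rule finite_measure.bounded_measure[OF fin_mu])
      also have "\<dots> = 1" using prob by (simp add: measure_def)
      finally show ?thesis .
    qed
    then show ?thesis by (simp add: mult_left_le)
  qed
  finally show ?thesis .
qed

lemma AE_mu: "(AE \<xi> in lborel. P \<xi>) \<Longrightarrow> (AE \<xi> in \<mu>. P \<xi>)"
  unfolding mu_def by (subst AE_density) (auto elim: eventually_mono)

lemma AE_bdry: "AE \<xi> in \<mu>. ereal (2*\<xi> - x) \<noteq> a \<and> ereal (2*\<xi> - x) \<noteq> b"
proof (rule AE_mu)
  have "AE \<xi> in lborel. \<xi> \<noteq> (real_of_ereal a + x)/2 \<and> \<xi> \<noteq> (real_of_ereal b + x)/2"
    by (rule AE_conjI[OF AE_lborel_singleton AE_lborel_singleton])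
  then show "AE \<xi> in lborel. ereal (2*\<xi> - x) \<noteq> a \<and> ereal (2*\<xi> - x) \<noteq> b"
  proof (rule eventually_mono)
    fix \<xi> assume h: "\<xi> \<noteq> (real_of_ereal a + x)/2 \<and> \<xi> \<noteq> (real_of_ereal b + x)/2"
    show "ereal (2*\<xi> - x) \<noteq> a \<and> ereal (2*\<xi> - x) \<noteq> b"
    proof
      show "ereal (2*\<xi> - x) \<noteq> a"
      proof
        assume "ereal (2*\<xi> - x) = a"
        then have "real_of_ereal a = 2*\<xi> - x" by auto
        with h show False by auto
      qed
      show "ereal (2*\<xi> - x) \<noteq> b"
      proof
        assume "ereal (2*\<xi> - x) = b"
        then have "real_of_ereal b = 2*\<xi> - x" by auto
        with h show False by auto
      qed
    qed
  qed
qed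

lemma ind_conv:
  assumes X: "X \<longlonglongrightarrow> x" and na: "ereal (2*\<xi> - x) \<noteq> a" and nb: "ereal (2*\<xi> - x) \<noteq> b"
  shows "(\<lambda>n. indicator (W (X n)) \<xi> :: real) \<longlonglongrightarrow> indicator (W x) \<xi>"
proof -
  define e where "e = ereal (2*\<xi> - x)"
  have Y: "(\<lambda>n. ereal (2*\<xi> - X n)) \<longlonglongrightarrow> e"
    unfolding e_def by (intro tendsto_ereal tendsto_intros X)
  have ea: "eventually (\<lambda>n. a < ereal (2*\<xi> - X n) \<longleftrightarrow> a < e) sequentially"
  proof (cases "a < e")
    case True
    then show ?thesis using order_tendstoD(1)[OF Y True] by (auto elim: eventually_mono)
  next
    case False
    then have "e < a" using na unfolding e_def by auto
    from order_tendstoD(2)[OF Y this] show ?thesis using False by (auto elim: eventually_mono)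
  qed
  have eb: "eventually (\<lambda>n. ereal (2*\<xi> - X n) < b \<longleftrightarrow> e < b) sequentially"
  proof (cases "e < b")
    case True
    then show ?thesis using order_tendstoD(2)[OF Y True] by (auto elim: eventually_mono)
  next
    case False
    then have "b < e" using nb unfolding e_def by auto
    from order_tendstoD(1)[OF Y this] show ?thesis using False by (auto elim: eventually_mono)
  qed
  have "eventually (\<lambda>n. indicator (W (X n)) \<xi> = (indicator (W x) \<xi> :: real)) sequentially"
    using eventually_conj[OF ea eb] by eventually_elim (simp add: W_def e_def indicator_def)
  then show ?thesis by (rule tendsto_eventually)
qed

lemma cont_W:
  fixes g :: "real \<Rightarrow> real"
  assumes g: "integrable \<mu> g"
  shows "((\<lambda>y. \<integral>\<xi>. indicator (W y) \<xi> * g \<xi> \<partial>\<mu>) \<longlongrightarrow> (\<integral>\<xi>. indicator (W x) \<xi> * g \<xi> \<partial>\<mu>)) (at x within S)"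
  unfolding tendsto_at_iff_sequentially
proof (intro allI impI)
  fix X assume X: "X \<longlonglongrightarrow> x"
  have gm[measurable]: "g \<in> borel_measurable borel" using borel_measurable_integrable[OF g] by simp
  show "((\<lambda>y. \<integral>\<xi>. indicator (W y) \<xi> * g \<xi> \<partial>\<mu>) \<circ> X) \<longlonglongrightarrow> (\<integral>\<xi>. indicator (W x) \<xi> * g \<xi> \<partial>\<mu>)"
    unfolding comp_def
  proof (rule integral_dominated_convergence[where w="\<lambda>\<xi>. norm (g \<xi>)"])
    show "integrable \<mu> (\<lambda>\<xi>. norm (g \<xi>))" using g by auto
    show "AE \<xi> in \<mu>. (\<lambda>n. indicator (W (X n)) \<xi> * g \<xi>) \<longlonglongrightarrow> indicator (W x) \<xi> * g \<xi>"
      using AE_bdry[of x] by (rule eventually_mono) (intro tendsto_mult ind_conv[OF X] tendsto_const, auto)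
    show "AE \<xi> in \<mu>. norm (indicator (W (X n)) \<xi> * g \<xi>) \<le> norm (g \<xi>)" for n
      by (intro AE_I2) (auto simp: indicator_def)
  qed auto
qed

lemma int_indS: fixes f :: "real \<Rightarrow> real" shows "S \<in> sets borel \<Longrightarrow> integrable \<mu> f \<Longrightarrow> integrable \<mu> (\<lambda>\<xi>. indicator S \<xi> * f \<xi>)"
  using integrable_mult_indicator[of S \<mu> f] by simp

lemma int_ind1: "S \<in> sets borel \<Longrightarrow> integrable \<mu> (\<lambda>\<xi>. indicator S \<xi> :: real)"
  using int_indS[OF _ int_const[of 1]] by simp

lemma int_indx: "S \<in> sets borel \<Longrightarrow> integrable \<mu> (\<lambda>\<xi>. indicator S \<xi> * \<xi>)"
  using int_indS[OF _ int_id] by simp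

lemma D_alt: "D y = 2*y*M0 (W y) - 2*M1 (W y)"
proof -
  have "D y = (\<integral>\<xi>. 2*y*indicator (W y) \<xi> - 2*(indicator (W y) \<xi> * \<xi>) \<partial>\<mu>)"
    unfolding D_def by (rule Bochner_Integration.integral_cong) (auto simp: algebra_simps)
  also have "\<dots> = 2*y*M0 (W y) - 2*M1 (W y)"
    unfolding M0_def M1_def using int_ind1[OF W_meas] int_indx[OF W_meas] by simp
  finally show ?thesis .
qed

lemma D_cont: "(D \<longlongrightarrow> D x) (at x within S)"
proof -
  have m0: "((\<lambda>y. M0 (W y)) \<longlongrightarrow> M0 (W x)) (at x within S)"
    using cont_W[OF int_const[of 1]] unfolding M0_def by simp
  have m1: "((\<lambda>y. M1 (W y)) \<longlongrightarrow> M1 (W x)) (at x within S)"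
    using cont_W[OF int_id] unfolding M1_def by simp
  have "((\<lambda>y. 2*y*M0 (W y) - 2*M1 (W y)) \<longlongrightarrow> 2*x*M0 (W x) - 2*M1 (W x)) (at x within S)"
    by (intro tendsto_intros m0 m1)
  then show ?thesis unfolding D_alt[abs_def] D_alt .
qed

lemma G_deriv:
  assumes x: "x \<in> I"
  shows "(calG \<mu> a b has_real_derivative D x) (at x within I)"
  unfolding has_field_derivative_iff
proof -
  let ?G = "calG \<mu> a b"
  have "((\<lambda>y. (?G y - ?G x) / (y - x) - D x) \<longlongrightarrow> 0) (at x within I)"
  proof (rule Lim_null_comparison)
    show "eventually (\<lambda>y. norm ((?G y - ?G x) / (y - x) - D x) \<le> \<bar>D y - D x\<bar> + \<bar>y - x\<bar>) (at x within I)"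
      unfolding eventually_at_filter
    proof (intro always_eventually allI impI)
      fix y assume y: "y \<noteq> x" "y \<in> I"
      have b1: "?G y - ?G x \<le> (y - x) * D x + (y - x)\<^sup>2" by (rule G_bound[OF x])
      have b2: "?G x - ?G y \<le> (x - y) * D y + (x - y)\<^sup>2" by (rule G_bound[OF y(2)])
      show "norm ((?G y - ?G x) / (y - x) - D x) \<le> \<bar>D y - D x\<bar> + \<bar>y - x\<bar>"
      proof (cases "x < y")
        case True
        then have p: "0 < y - x" by simp
        have "?G y - ?G x \<le> (D x + (y - x)) * (y - x)" using b1 by (simp add: power2_eq_square algebra_simps)
        then have u: "(?G y - ?G x) / (y - x) \<le> D x + (y - x)" by (simp add: pos_divide_le_eq[OF p])
        have "(D y - (y - x)) * (y - x) \<le> ?G y - ?G x" using b2 by (simp add: power2_eq_square algebra_simps)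
        then have l: "D y - (y - x) \<le> (?G y - ?G x) / (y - x)" by (simp add: pos_le_divide_eq[OF p])
        show ?thesis using u l p by (simp add: abs_if)
      next
        case False
        then have p: "0 < x - y" using y by simp
        have e: "(?G y - ?G x) / (y - x) = (?G x - ?G y) / (x - y)"
          by (simp add: divide_simps) (simp add: algebra_simps)
        have "?G x - ?G y \<le> (D y + (x - y)) * (x - y)" using b2 by (simp add: power2_eq_square algebra_simps)
        then have u: "(?G x - ?G y) / (x - y) \<le> D y + (x - y)" by (simp add: pos_divide_le_eq[OF p])
        have "(D x - (x - y)) * (x - y) \<le> ?G x - ?G y" using b1 by (simp add: power2_eq_square algebra_simps)
        then have l: "D x - (x - y) \<le> (?G x - ?G y) / (x - y)" by (simp add: pos_le_divide_eq[OF p])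
        show ?thesis unfolding e using u l p by (simp add: abs_if)
      qed
    qed
    have "((\<lambda>y. \<bar>D y - D x\<bar> + \<bar>y - x\<bar>) \<longlongrightarrow> \<bar>D x - D x\<bar> + \<bar>x - x\<bar>) (at x within I)"
      by (intro tendsto_intros D_cont)
    then show "((\<lambda>y. \<bar>D y - D x\<bar> + \<bar>y - x\<bar>) \<longlongrightarrow> 0) (at x within I)" by simp
  qed
  then show "((\<lambda>y. (?G y - ?G x) / (y - x)) \<longlongrightarrow> D x) (at x within I)"
    by (simp add: LIM_zero_iff)
qed

lemma to_lborel: fixes f :: "real \<Rightarrow> real" assumes [measurable]: "f \<in> borel_measurable borel"
  shows "(\<integral>\<xi>. f \<xi> \<partial>\<mu>) = (\<integral>\<xi>. \<phi> \<xi> * f \<xi> \<partial>lborel)"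
  unfolding mu_def by (subst integral_density) (auto simp: phi_nonneg)

lemma to_lborel_int: fixes f :: "real \<Rightarrow> real" assumes [measurable]: "f \<in> borel_measurable borel"
  shows "integrable \<mu> f \<longleftrightarrow> integrable lborel (\<lambda>\<xi>. \<phi> \<xi> * f \<xi>)"
  unfolding mu_def by (subst integrable_density) (auto simp: phi_nonneg)

lemma pos_int:
  fixes g :: "real \<Rightarrow> real"
  assumes [measurable]: "g \<in> borel_measurable borel" and nn: "\<And>\<xi>. 0 \<le> g \<xi>"
    and pq: "p < q" and pos: "\<And>\<xi>. p \<le> \<xi> \<Longrightarrow> \<xi> \<le> q \<Longrightarrow> 0 < g \<xi>"
    and int: "integrable lborel g"
  shows "0 < (\<integral>\<xi>. g \<xi> \<partial>lborel)"
proof -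
  have ge: "0 \<le> (\<integral>\<xi>. g \<xi> \<partial>lborel)" using nn by (simp add: Bochner_Integration.integral_nonneg)
  have "(\<integral>\<xi>. g \<xi> \<partial>lborel) \<noteq> 0"
  proof
    assume "(\<integral>\<xi>. g \<xi> \<partial>lborel) = 0"
    then have "AE \<xi> in lborel. g \<xi> = 0" using integral_nonneg_eq_0_iff_AE[OF int] nn by auto
    then have "AE \<xi> in lborel. \<xi> \<notin> {p..q}" by (rule eventually_mono) (use pos in force)
    then have "{p..q} \<in> null_sets lborel" by (subst AE_iff_null_sets) auto
    then have "emeasure lborel {p..q} = 0" by auto
    then show False using pq by simp
  qed
  with ge show ?thesis by simp
qed

lemma J_pos:
  assumes t: "t \<in> J" shows "0 < \<phi> t"
proof -
  define S where "S = {x. 0 < \<phi> x}"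
  have clS: "closure S = I" unfolding S_def I_def using I_cl by simp
  have at: "a < ereal t" and tb: "ereal t < b" using t by (auto simp: J_def)
  have "\<exists>p\<in>S. p < t"
  proof (rule ccontr)
    assume "\<not> ?thesis"
    then have "S \<subseteq> {t..}" by auto
    then have "closure S \<subseteq> {t..}" by (intro closure_minimal) auto
    moreover obtain s where "a < ereal s" "ereal s < ereal t" using ereal_dense2[OF at] by auto
    moreover have "s \<in> I" using calculation(2) order.strict_trans[OF calculation(3) tb] unfolding I_def by (auto simp: less_imp_le)
    ultimately show False using clS by auto
  qed
  then obtain p where p: "p \<in> S" "p < t" by blast
  have "\<exists>q\<in>S. t < q"
  proof (rule ccontr)
    assume "\<not> ?thesis"
    then have "S \<subseteq> {..t}" by (auto simp: not_less)
    then have "closure S \<subseteq> {..t}" by (intro closure_minimal) auto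
    moreover obtain s where "ereal t < ereal s" "ereal s < b" using ereal_dense2[OF tb] by auto
    moreover have "s \<in> I" using calculation(3) order.strict_trans[OF at calculation(2)] unfolding I_def by (auto simp: less_imp_le)
    ultimately show False using clS by auto
  qed
  then obtain q where q: "q \<in> S" "t < q" by blast
  define l where "l = (t - p) / (q - p)"
  have l: "0 < l" "l < 1" using p q by (auto simp: l_def field_simps)
  have "l * (q - p) = t - p" using p q by (simp add: l_def)
  then have te: "(1 - l) * p + l * q = t" by (simp add: algebra_simps)
  have "\<phi> p powr (1 - l) * \<phi> q powr l \<le> \<phi> ((1 - l) * p + l * q)"
    using lc l unfolding log_concave_def by blast
  moreover have "0 < \<phi> p powr (1 - l) * \<phi> q powr l" using p q by (simp add: S_def)
  ultimately show ?thesis using te by simp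
qed

lemma W_sub_J: assumes x: "x \<in> I" shows "W x \<subseteq> J"
proof
  fix \<xi> assume xi: "\<xi> \<in> W x"
  have h: "a \<le> ereal x" "ereal x \<le> b" "a < ereal (2*\<xi> - x)" "ereal (2*\<xi> - x) < b"
    using x xi by (auto simp: I_def W_def)
  have "a < ereal \<xi>" using h a_ne by (cases a) auto
  moreover have "ereal \<xi> < b" using h b_ne by (cases b) auto
  ultimately show "\<xi> \<in> J" by (simp add: J_def)
qed

lemma W_interval: "p \<in> W x \<Longrightarrow> q \<in> W x \<Longrightarrow> p \<le> z \<Longrightarrow> z \<le> q \<Longrightarrow> z \<in> W x"
  unfolding W_def
  by (auto intro: less_le_trans[of a "ereal (2*p-x)"] le_less_trans[of _ "ereal (2*q-x)" b])

lemma W_big: "\<exists>p q. p < q \<and> {p..q} \<subseteq> W x"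
proof -
  obtain r1 where r1: "a < ereal r1" "ereal r1 < b" using ereal_dense2[OF ab] by auto
  obtain r2 where r2: "ereal r1 < ereal r2" "ereal r2 < b" using ereal_dense2[OF r1(2)] by auto
  have "{(r1+x)/2..(r2+x)/2} \<subseteq> W x"
  proof
    fix z assume z: "z \<in> {(r1+x)/2..(r2+x)/2}"
    then have "r1 \<le> 2*z - x" "2*z - x \<le> r2" by auto
    then show "z \<in> W x" unfolding W_def using r1 r2
      by (auto intro: less_le_trans[of a "ereal r1"] le_less_trans[of _ "ereal r2" b])
  qed
  moreover have "(r1+x)/2 < (r2+x)/2" using r2 by simp
  ultimately show ?thesis by blast
qed

lemma M0_pos: assumes x: "x \<in> I" shows "0 < M0 (W x)"
proof -
  obtain p q where pq: "p < q" "{p..q} \<subseteq> W x" using W_big by blast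
  have "M0 (W x) = (\<integral>\<xi>. \<phi> \<xi> * indicator (W x) \<xi> \<partial>lborel)"
    unfolding M0_def by (rule to_lborel) simp
  also have "0 < \<dots>"
  proof (rule pos_int[OF _ _ pq(1)])
    show "0 \<le> \<phi> \<xi> * indicator (W x) \<xi>" for \<xi> by (simp add: phi_nonneg)
    show "0 < \<phi> \<xi> * indicator (W x) \<xi>" if "p \<le> \<xi>" "\<xi> \<le> q" for \<xi>
      using that pq W_sub_J[OF x] J_pos by (auto simp: subset_iff)
    show "integrable lborel (\<lambda>\<xi>. \<phi> \<xi> * indicator (W x) \<xi>)"
      using int_ind1[OF W_meas, of x] to_lborel_int[of "indicator (W x)"] by simp
  qed simp
  finally show ?thesis .
qed

definition "L y = {\<xi>. ereal \<xi> \<le> y}"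

lemma L_meas[measurable]: "L y \<in> sets borel"
  unfolding L_def by measurable

lemma measure_UNIV: "measure \<mu> UNIV = 1"
  using prob by (simp add: measure_def)

lemma Fext_L: "Fext \<mu> y = M0 (L y)"
proof -
  have "M0 (L y) = measure \<mu> (L y)" unfolding M0_def by simp
  moreover have "Fext \<mu> y = measure \<mu> (L y)"
    by (cases y) (auto simp: Fext_def L_def measure_UNIV atMost_def)
  ultimately show ?thesis by simp
qed

lemma Kext_L: "Kext \<mu> y = M1 (L y)"
  by (cases y) (auto simp: Kext_def L_def M1_def set_lebesgue_integral_def atMost_def indicator_def)

lemma win_diff:
  assumes x: "x \<in> I" and nb: "ereal (2*\<xi> - x) \<noteq> b"
  shows "indicator (L ((b + ereal x)/2)) \<xi> - indicator (L ((a + ereal x)/2)) \<xi> = (indicator (W x) \<xi> :: real)"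
proof -
  have cd: "(a + ereal x)/2 \<le> (b + ereal x)/2"
    using ab a_ne b_ne by (cases a; cases b) auto
  have ne: "ereal \<xi> \<noteq> (b + ereal x)/2"
    using nb b_ne by (cases b) (auto simp: field_simps)
  have w: "\<xi> \<in> W x \<longleftrightarrow> (a + ereal x)/2 < ereal \<xi> \<and> ereal \<xi> < (b + ereal x)/2"
    using W_eq[of x] by (auto simp: add.commute)
  show ?thesis using cd ne w unfolding L_def indicator_def
    by (auto simp: not_le)
qed

lemma Phi_eq: assumes x: "x \<in> I" shows "Phi \<mu> a b x = M1 (W x) / M0 (W x)"
proof -
  let ?d = "(b + ereal x)/2" and ?c = "(a + ereal x)/2"
  have ae: "AE \<xi> in \<mu>. indicator (L ?d) \<xi> - indicator (L ?c) \<xi> = (indicator (W x) \<xi> :: real)"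
    using AE_bdry[of x] by (rule eventually_mono) (use win_diff[OF x] in auto)
  have "Fext \<mu> ?d - Fext \<mu> ?c = (\<integral>\<xi>. indicator (L ?d) \<xi> - indicator (L ?c) \<xi> \<partial>\<mu>)"
    unfolding Fext_L M0_def using int_ind1[OF L_meas] by simp
  also have "\<dots> = M0 (W x)" unfolding M0_def by (rule integral_cong_AE) (use ae in auto)
  finally have F: "Fext \<mu> ?d - Fext \<mu> ?c = M0 (W x)" .
  have "Kext \<mu> ?d - Kext \<mu> ?c = (\<integral>\<xi>. (indicator (L ?d) \<xi> - indicator (L ?c) \<xi>) * \<xi> \<partial>\<mu>)"
    unfolding Kext_L M1_def using int_indx[OF L_meas] by (simp add: left_diff_distrib)
  also have "\<dots> = M1 (W x)" unfolding M1_def by (rule integral_cong_AE) (use ae in auto)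
  finally have K: "Kext \<mu> ?d - Kext \<mu> ?c = M1 (W x)" .
  show ?thesis unfolding Phi_def F K ..
qed

definition "P x = M1 (W x) / M0 (W x)"

lemma M1_ge: assumes "S \<in> sets borel" "\<And>\<xi>. \<xi> \<in> S \<Longrightarrow> k \<le> \<xi>" shows "k * M0 S \<le> M1 S"
proof -
  have "k * M0 S = (\<integral>\<xi>. indicator S \<xi> * k \<partial>\<mu>)" unfolding M0_def by (simp add: mult.commute)
  also have "\<dots> \<le> M1 S" unfolding M1_def
    using assms int_indS[OF assms(1) int_const[of k]] int_indx[OF assms(1)]
    by (intro integral_mono) (auto simp: indicator_def)
  finally show ?thesis .
qed

lemma M1_le: assumes "S \<in> sets borel" "\<And>\<xi>. \<xi> \<in> S \<Longrightarrow> \<xi> \<le> k" shows "M1 S \<le> k * M0 S"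
proof -
  have "M1 S \<le> (\<integral>\<xi>. indicator S \<xi> * k \<partial>\<mu>)" unfolding M1_def
    using assms int_indS[OF assms(1) int_const[of k]] int_indx[OF assms(1)]
    by (intro integral_mono) (auto simp: indicator_def)
  also have "\<dots> = k * M0 S" unfolding M0_def by (simp add: mult.commute)
  finally show ?thesis .
qed

lemma M0_nonneg: "0 \<le> M0 S"
  unfolding M0_def by (simp add: Bochner_Integration.integral_nonneg)

lemma P_in_I: assumes x: "x \<in> I" shows "P x \<in> I"
proof -
  have pos: "0 < M0 (W x)" by (rule M0_pos[OF x])
  have "a \<le> ereal (P x)"
  proof (cases a)
    case (real r)
    have "r * M0 (W x) \<le> M1 (W x)"
    proof (rule M1_ge[OF W_meas])
      fix \<xi> assume "\<xi> \<in> W x"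
      then have "a < ereal \<xi>" using W_sub_J[OF x] by (auto simp: J_def)
      then show "r \<le> \<xi>" using real by simp
    qed
    then have "r \<le> P x" unfolding P_def using pos by (simp add: pos_le_divide_eq)
    then show ?thesis using real by simp
  qed (use a_ne in auto)
  moreover have "ereal (P x) \<le> b"
  proof (cases b)
    case (real r)
    have "M1 (W x) \<le> r * M0 (W x)"
    proof (rule M1_le[OF W_meas])
      fix \<xi> assume "\<xi> \<in> W x"
      then have "ereal \<xi> < b" using W_sub_J[OF x] by (auto simp: J_def)
      then show "\<xi> \<le> r" using real by simp
    qed
    then have "P x \<le> r" unfolding P_def using pos by (simp add: pos_divide_le_eq)
    then show ?thesis using real by simp
  qed (use b_ne in auto)
  ultimately show ?thesis by (simp add: I_def)
qed

lemma M_Un: assumes "S \<in> sets borel" "T \<in> sets borel" "S \<inter> T = {}"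
  shows "M0 (S \<union> T) = M0 S + M0 T" "M1 (S \<union> T) = M1 S + M1 T"
proof -
  have e: "(\<lambda>\<xi>. indicator (S \<union> T) \<xi> :: real) = (\<lambda>\<xi>. indicator S \<xi> + indicator T \<xi>)"
    using assms(3) by (auto simp: indicator_disj_union)
  show "M0 (S \<union> T) = M0 S + M0 T" unfolding M0_def e
    by (rule Bochner_Integration.integral_add[OF int_ind1[OF assms(1)] int_ind1[OF assms(2)]])
  show "M1 (S \<union> T) = M1 S + M1 T" unfolding M1_def
    using assms int_indx[OF assms(1)] int_indx[OF assms(2)]
    by (simp add: indicator_disj_union distrib_right)
qed

lemma M_empty: "M0 {} = 0" "M1 {} = 0"
  unfolding M0_def M1_def by simp_all

lemma sep_k:
  assumes S: "S \<noteq> {}" and T: "T \<noteq> {}" and st: "\<And>s t. s \<in> S \<Longrightarrow> t \<in> T \<Longrightarrow> s \<le> (t::real)"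
  shows "\<exists>k. (\<forall>s\<in>S. s \<le> k) \<and> (\<forall>t\<in>T. k \<le> t)"
proof -
  obtain t0 where t0: "t0 \<in> T" using T by auto
  have bdd: "bdd_above S" using st t0 by (auto simp: bdd_above_def)
  show ?thesis
    by (rule exI[of _ "Sup S"]) (use S bdd st in \<open>auto intro: cSup_upper cSup_least\<close>)
qed

lemma mean_Un:
  assumes m: "S \<in> sets borel" "T \<in> sets borel" and d: "S \<inter> T = {}" and pos: "0 < M0 S"
    and st: "\<And>s t. s \<in> S \<Longrightarrow> t \<in> T \<Longrightarrow> s \<le> t"
  shows "M1 S / M0 S \<le> M1 (S \<union> T) / M0 (S \<union> T)"
proof (cases "T = {}")
  case True then show ?thesis by simp
next
  case False
  have "S \<noteq> {}" using pos M_empty by auto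
  then obtain k where k: "\<forall>s\<in>S. s \<le> k" "\<forall>t\<in>T. k \<le> t" using sep_k[OF _ False st] by blast
  have s1: "M1 S \<le> k * M0 S" using k by (intro M1_le m) auto
  have t1: "k * M0 T \<le> M1 T" using k by (intro M1_ge m) auto
  have t0: "0 \<le> M0 T" by (rule M0_nonneg)
  have "M1 S * M0 T \<le> k * M0 S * M0 T" using s1 t0 by (rule mult_right_mono)
  also have "\<dots> = (k * M0 T) * M0 S" by simp
  also have "\<dots> \<le> M1 T * M0 S" using t1 pos by (intro mult_right_mono) auto
  finally have key: "M1 S * M0 T \<le> M1 T * M0 S" .
  have pos2: "0 < M0 S + M0 T" using pos t0 by simp
  have "M1 S / M0 S \<le> (M1 S + M1 T) / (M0 S + M0 T)"
    using key pos pos2 by (simp add: divide_simps) (simp add: algebra_simps)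
  then show ?thesis using M_Un[OF m d] by simp
qed

lemma mean_Un2:
  assumes m: "S \<in> sets borel" "T \<in> sets borel" and d: "S \<inter> T = {}" and pos: "0 < M0 S"
    and st: "\<And>s t. s \<in> S \<Longrightarrow> t \<in> T \<Longrightarrow> t \<le> s"
  shows "M1 (S \<union> T) / M0 (S \<union> T) \<le> M1 S / M0 S"
proof (cases "T = {}")
  case True then show ?thesis by simp
next
  case False
  have "S \<noteq> {}" using pos M_empty by auto
  then obtain k where k: "\<forall>t\<in>T. t \<le> k" "\<forall>s\<in>S. k \<le> s" using sep_k[OF False _ st] by blast
  have s1: "k * M0 S \<le> M1 S" using k by (intro M1_ge m) auto
  have t1: "M1 T \<le> k * M0 T" using k by (intro M1_le m) auto
  have t0: "0 \<le> M0 T" by (rule M0_nonneg)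
  have "M1 T * M0 S \<le> k * M0 T * M0 S" using t1 pos by (intro mult_right_mono) auto
  also have "\<dots> = (k * M0 S) * M0 T" by simp
  also have "\<dots> \<le> M1 S * M0 T" using s1 t0 by (rule mult_right_mono)
  finally have key: "M1 T * M0 S \<le> M1 S * M0 T" .
  have pos2: "0 < M0 S + M0 T" using pos t0 by simp
  have "(M1 S + M1 T) / (M0 S + M0 T) \<le> M1 S / M0 S"
    using key pos pos2 by (simp add: divide_simps) (simp add: algebra_simps)
  then show ?thesis using M_Un[OF m d] by simp
qed

lemma P_mono: assumes x: "x \<in> I" and y: "y \<in> I" and xy: "x < y" shows "P x \<le> P y"
proof -
  define U where "U = {\<xi>. a < ereal (2*\<xi> - x) \<and> ereal (2*\<xi> - y) < b}"
  have Um[measurable]: "U \<in> sets borel" unfolding U_def by measurable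
  have U1: "U = W x \<union> (U - W x)"
  proof -
    have "W x \<subseteq> U" unfolding U_def W_def
    proof safe
      fix \<xi> assume "ereal (2*\<xi> - x) < b"
      moreover have "ereal (2*\<xi> - y) < ereal (2*\<xi> - x)" using xy by simp
      ultimately show "ereal (2*\<xi> - y) < b" by (rule less_trans[rotated])
    qed
    then show ?thesis by auto
  qed
  have U2: "U = W y \<union> (U - W y)"
  proof -
    have "W y \<subseteq> U" unfolding U_def W_def
    proof safe
      fix \<xi> assume "a < ereal (2*\<xi> - y)"
      moreover have "ereal (2*\<xi> - y) < ereal (2*\<xi> - x)" using xy by simp
      ultimately show "a < ereal (2*\<xi> - x)" by (rule less_trans)
    qed
    then show ?thesis by auto
  qed
  have "P x \<le> M1 (W x \<union> (U - W x)) / M0 (W x \<union> (U - W x))" unfolding P_def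
  proof (rule mean_Un)
    show "0 < M0 (W x)" by (rule M0_pos[OF x])
    fix s t assume s: "s \<in> W x" and t: "t \<in> U - W x"
    then have "ereal (2 * s - x) < b" "b \<le> ereal (2 * t - x)" unfolding W_def U_def by auto
    then have "ereal (2 * s - x) < ereal (2 * t - x)" by (rule less_le_trans)
    then show "s \<le> t" by simp
  qed auto
  also have "\<dots> = M1 (W y \<union> (U - W y)) / M0 (W y \<union> (U - W y))" using U1 U2 by simp
  also have "\<dots> \<le> P y" unfolding P_def
  proof (rule mean_Un2)
    show "0 < M0 (W y)" by (rule M0_pos[OF y])
    fix s t assume s: "s \<in> W y" and t: "t \<in> U - W y"
    then have "a < ereal (2 * s - y)" "ereal (2 * t - y) \<le> a" unfolding W_def U_def by auto
    then have "ereal (2 * t - y) < ereal (2 * s - y)" by (rule le_less_trans[rotated])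
    then show "t \<le> s" by simp
  qed auto
  finally show ?thesis .
qed

lemma lc_pair:
  assumes vu: "v < u" and s: "0 < s"
  shows "\<phi> v * \<phi> (u + s) \<le> \<phi> u * \<phi> (v + s)"
proof -
  define l where "l = (u - v) / (u - v + s)"
  have l: "0 < l" "l < 1" using vu s by (auto simp: l_def field_simps)
  have ll: "l * (u - v + s) = u - v" using vu s by (simp add: l_def)
  have e1: "(1 - l) * v + l * (u + s) = u" using ll by (simp add: algebra_simps)
  have e2: "(1 - (1 - l)) * v + (1 - l) * (u + s) = v + s" using ll by (simp add: algebra_simps)
  have lcr: "\<And>x y t. 0 < t \<Longrightarrow> t < 1 \<Longrightarrow> \<phi> x powr (1 - t) * \<phi> y powr t \<le> \<phi> ((1 - t) * x + t * y)"
    using lc unfolding log_concave_def by blast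
  have c1: "\<phi> v powr (1 - l) * \<phi> (u + s) powr l \<le> \<phi> u"
    using lcr[OF l, of v "u + s"] unfolding e1 .
  have c2: "\<phi> v powr (1 - (1 - l)) * \<phi> (u + s) powr (1 - l) \<le> \<phi> (v + s)"
  proof -
    have "0 < 1 - l" "1 - l < 1" using l by auto
    from lcr[OF this, of v "u + s"] show ?thesis unfolding e2 .
  qed
  have "(\<phi> v powr (1 - l) * \<phi> (u + s) powr l) * (\<phi> v powr (1 - (1 - l)) * \<phi> (u + s) powr (1 - l))
        \<le> \<phi> u * \<phi> (v + s)"
    using c1 c2 by (intro mult_mono) (auto simp: phi_nonneg)
  moreover have p1: "\<phi> v powr (1 - l) * \<phi> v powr (1 - (1 - l)) = \<phi> v"
    using powr_add[of "\<phi> v" "1 - l" "1 - (1 - l)"] powr_one[OF phi_nonneg[of v]] by simp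
  moreover have p2: "\<phi> (u + s) powr l * \<phi> (u + s) powr (1 - l) = \<phi> (u + s)"
    using powr_add[of "\<phi> (u + s)" l "1 - l"] powr_one[OF phi_nonneg[of "u + s"]] by simp
  moreover have "(\<phi> v powr (1 - l) * \<phi> (u + s) powr l) * (\<phi> v powr (1 - (1 - l)) * \<phi> (u + s) powr (1 - l))
        = (\<phi> v powr (1 - l) * \<phi> v powr (1 - (1 - l))) * (\<phi> (u + s) powr l * \<phi> (u + s) powr (1 - l))"
    by (simp only: mult_ac)
  ultimately show ?thesis by simp
qed

lemma mlr:
  assumes t: "0 < t"
  shows "(u - m) * (\<phi> (t + u) * \<phi> m - \<phi> (t + m) * \<phi> u) \<le> 0"
proof (cases u m rule: linorder_cases)
  case less
  have "\<phi> u * \<phi> (m + t) \<le> \<phi> m * \<phi> (u + t)" by (rule lc_pair[OF less t])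
  then have "0 \<le> \<phi> (t + u) * \<phi> m - \<phi> (t + m) * \<phi> u" by (simp add: add.commute mult.commute)
  then show ?thesis using less by (simp add: mult_nonpos_nonneg)
next
  case greater
  have "\<phi> m * \<phi> (u + t) \<le> \<phi> u * \<phi> (m + t)" by (rule lc_pair[OF greater t])
  then have "\<phi> (t + u) * \<phi> m - \<phi> (t + m) * \<phi> u \<le> 0" by (simp add: add.commute mult.commute)
  then show ?thesis using greater by (simp add: mult_nonneg_nonpos)
qed simp

lemma M0_lborel: "S \<in> sets borel \<Longrightarrow> M0 S = (\<integral>\<xi>. \<phi> \<xi> * indicator S \<xi> \<partial>lborel)"
  unfolding M0_def by (rule to_lborel) simp

lemma M1_lborel: "S \<in> sets borel \<Longrightarrow> M1 S = (\<integral>\<xi>. \<phi> \<xi> * indicator S \<xi> * \<xi> \<partial>lborel)"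
  unfolding M1_def by (subst to_lborel) (simp_all add: mult.assoc)

lemma int0_lborel: "S \<in> sets borel \<Longrightarrow> integrable lborel (\<lambda>\<xi>. \<phi> \<xi> * indicator S \<xi>)"
  using int_ind1[of S] to_lborel_int[of "indicator S"] by simp

lemma int1_lborel: "S \<in> sets borel \<Longrightarrow> integrable lborel (\<lambda>\<xi>. \<phi> \<xi> * indicator S \<xi> * \<xi>)"
  using int_indx[of S] to_lborel_int[of "\<lambda>\<xi>. indicator S \<xi> * \<xi>"] by (simp add: mult.assoc)

lemma P_in_W: assumes x: "x \<in> I" shows "P x \<in> W x"
proof (rule ccontr)
  assume nW: "P x \<notin> W x"
  define m where "m = P x"
  have pos: "0 < M0 (W x)" by (rule M0_pos[OF x])
  have B: "(\<integral>\<xi>. \<phi> \<xi> * indicator (W x) \<xi> * \<xi> - m * (\<phi> \<xi> * indicator (W x) \<xi>) \<partial>lborel) = 0"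
  proof -
    have "(\<integral>\<xi>. \<phi> \<xi> * indicator (W x) \<xi> * \<xi> - m * (\<phi> \<xi> * indicator (W x) \<xi>) \<partial>lborel)
        = (\<integral>\<xi>. \<phi> \<xi> * indicator (W x) \<xi> * \<xi> \<partial>lborel) - m * (\<integral>\<xi>. \<phi> \<xi> * indicator (W x) \<xi> \<partial>lborel)"
      using int0_lborel[OF W_meas] int1_lborel[OF W_meas] by simp
    also have "\<dots> = M1 (W x) - m * M0 (W x)"
      by (simp only: M0_lborel[OF W_meas] M1_lborel[OF W_meas])
    also have "\<dots> = 0" using pos by (simp add: m_def P_def)
    finally show ?thesis .
  qed
  obtain p q where pq: "p < q" "{p..q} \<subseteq> W x" using W_big by blast
  have sides: "(\<forall>\<xi>\<in>W x. m < \<xi>) \<or> (\<forall>\<xi>\<in>W x. \<xi> < m)"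
  proof (rule ccontr)
    assume "\<not> ?thesis"
    then have h1: "\<not> (\<forall>\<xi>\<in>W x. m < \<xi>)" and h2: "\<not> (\<forall>\<xi>\<in>W x. \<xi> < m)" by simp_all
    from h1 obtain \<xi>1 where "\<xi>1 \<in> W x" "\<not> m < \<xi>1" by blast
    moreover from h2 obtain \<xi>2 where "\<xi>2 \<in> W x" "\<not> \<xi>2 < m" by blast
    ultimately have w1: "\<xi>1 \<in> W x" and w2: "\<xi>1 \<le> m" and w3: "\<xi>2 \<in> W x" and w4: "m \<le> \<xi>2" by auto
    have "m \<in> W x" by (rule W_interval[OF w1 w3 w2 w4])
    then show False using nW m_def by simp
  qed
  have intg: "integrable lborel (\<lambda>\<xi>. \<phi> \<xi> * indicator (W x) \<xi> * \<xi> - m * (\<phi> \<xi> * indicator (W x) \<xi>))"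
    using int0_lborel[OF W_meas] int1_lborel[OF W_meas] by (intro Bochner_Integration.integrable_diff integrable_mult_right)
  have phipos: "\<And>\<xi>. \<xi> \<in> W x \<Longrightarrow> 0 < \<phi> \<xi>" using W_sub_J[OF x] by (intro J_pos) blast
  from sides show False
  proof
    assume h: "\<forall>\<xi>\<in>W x. m < \<xi>"
    have "0 < (\<integral>\<xi>. \<phi> \<xi> * indicator (W x) \<xi> * \<xi> - m * (\<phi> \<xi> * indicator (W x) \<xi>) \<partial>lborel)"
    proof (rule pos_int[OF _ _ pq(1) _ intg])
      show "0 \<le> \<phi> \<xi> * indicator (W x) \<xi> * \<xi> - m * (\<phi> \<xi> * indicator (W x) \<xi>)" for \<xi>
      proof (cases "\<xi> \<in> W x")
        case True
        then have "0 \<le> \<phi> \<xi> * (\<xi> - m)" using h phi_nonneg[of \<xi>] by (auto intro!: mult_nonneg_nonneg simp: less_imp_le)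
        then show ?thesis using True by (simp add: algebra_simps)
      qed simp
      show "0 < \<phi> \<xi> * indicator (W x) \<xi> * \<xi> - m * (\<phi> \<xi> * indicator (W x) \<xi>)" if "p \<le> \<xi>" "\<xi> \<le> q" for \<xi>
      proof -
        have w: "\<xi> \<in> W x" using that pq by auto
        then have "0 < \<phi> \<xi> * (\<xi> - m)" using h phipos[OF w] by auto
        then show ?thesis using w by (simp add: algebra_simps)
      qed
    qed simp
    then show False using B by simp
  next
    assume h: "\<forall>\<xi>\<in>W x. \<xi> < m"
    have intg': "integrable lborel (\<lambda>\<xi>. - (\<phi> \<xi> * indicator (W x) \<xi> * \<xi> - m * (\<phi> \<xi> * indicator (W x) \<xi>)))"
      by (rule Bochner_Integration.integrable_minus[OF intg])
    have "0 < (\<integral>\<xi>. - (\<phi> \<xi> * indicator (W x) \<xi> * \<xi> - m * (\<phi> \<xi> * indicator (W x) \<xi>)) \<partial>lborel)"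
    proof (rule pos_int[OF _ _ pq(1) _ intg'])
      show "0 \<le> - (\<phi> \<xi> * indicator (W x) \<xi> * \<xi> - m * (\<phi> \<xi> * indicator (W x) \<xi>))" for \<xi>
      proof (cases "\<xi> \<in> W x")
        case True
        then have "0 \<le> \<phi> \<xi> * (m - \<xi>)" using h phi_nonneg[of \<xi>] by (auto intro!: mult_nonneg_nonneg simp: less_imp_le)
        then show ?thesis using True by (simp add: algebra_simps)
      qed simp
      show "0 < - (\<phi> \<xi> * indicator (W x) \<xi> * \<xi> - m * (\<phi> \<xi> * indicator (W x) \<xi>))" if "p \<le> \<xi>" "\<xi> \<le> q" for \<xi>
      proof -
        have w: "\<xi> \<in> W x" using that pq by auto
        then have "0 < \<phi> \<xi> * (m - \<xi>)" using h phipos[OF w] by auto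
        then show ?thesis using w by (simp add: algebra_simps)
      qed
    qed simp
    then show False using B Bochner_Integration.integral_minus[of lborel "\<lambda>\<xi>. \<phi> \<xi> * indicator (W x) \<xi> * \<xi> - m * (\<phi> \<xi> * indicator (W x) \<xi>)"]
      by (simp only:)
  qed
qed

lemma shift_int: "(\<integral>\<xi>. f \<xi> \<partial>lborel) = (\<integral>u. f (t + u) \<partial>lborel)" for f :: "real \<Rightarrow> real"
  using lborel_integral_real_affine[of 1 f t] by simp

lemma shift_intg: "integrable lborel f \<Longrightarrow> integrable lborel (\<lambda>u. f (t + u))" for f :: "real \<Rightarrow> real"
  using lborel_integrable_real_affine_iff[of 1 f t] by simp

lemma P_lip: assumes x: "x \<in> I" and y: "y \<in> I" and xy: "x < y" shows "P y \<le> P x + (y - x)/2"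
proof -
  define t where "t = (y - x)/2"
  define m where "m = P x"
  have t: "0 < t" using xy by (simp add: t_def)
  have ind: "indicator (W y) (t + u) = (indicator (W x) u :: real)" for u
  proof -
    have "2 * (t + u) - y = 2 * u - x" by (simp add: t_def field_simps)
    then have "(t + u \<in> W y) = (u \<in> W x)" unfolding W_def by (simp only: mem_Collect_eq)
    then show ?thesis unfolding indicator_def by simp
  qed
  define g0 where "g0 u = \<phi> (t + u) * indicator (W x) u" for u
  define g1 where "g1 u = \<phi> (t + u) * indicator (W x) u * (t + u)" for u
  define h0 where "h0 u = \<phi> u * indicator (W x) u" for u
  define h1 where "h1 u = \<phi> u * indicator (W x) u * u" for u
  have g0e: "g0 = (\<lambda>u. \<phi> (t + u) * indicator (W y) (t + u))" unfolding g0_def ind ..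
  have g1e: "g1 = (\<lambda>u. \<phi> (t + u) * indicator (W y) (t + u) * (t + u))" unfolding g1_def ind ..
  have ig0: "integrable lborel g0"
    using shift_intg[OF int0_lborel[OF W_meas[of y]], of t] unfolding g0e .
  have ig1: "integrable lborel g1"
    using shift_intg[OF int1_lborel[OF W_meas[of y]], of t] unfolding g1e .
  have ih0: "integrable lborel h0" unfolding h0_def by (rule int0_lborel[OF W_meas])
  have ih1: "integrable lborel h1" unfolding h1_def by (rule int1_lborel[OF W_meas])
  have Ig0: "(\<integral>u. g0 u \<partial>lborel) = M0 (W y)"
    unfolding M0_lborel[OF W_meas] shift_int[where t=t and f="\<lambda>\<xi>. \<phi> \<xi> * indicator (W y) \<xi>"] g0e ..
  have Ig1: "(\<integral>u. g1 u \<partial>lborel) = M1 (W y)"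
    unfolding M1_lborel[OF W_meas] shift_int[where t=t and f="\<lambda>\<xi>. \<phi> \<xi> * indicator (W y) \<xi> * \<xi>"] g1e ..
  have Ih0: "(\<integral>u. h0 u \<partial>lborel) = M0 (W x)" unfolding M0_lborel[OF W_meas] h0_def ..
  have Ih1: "(\<integral>u. h1 u \<partial>lborel) = M1 (W x)" unfolding M1_lborel[OF W_meas] h1_def ..
  have posx: "0 < M0 (W x)" by (rule M0_pos[OF x])
  have posy: "0 < M0 (W y)" by (rule M0_pos[OF y])
  have phim: "0 < \<phi> m" unfolding m_def using P_in_W[OF x] W_sub_J[OF x] by (intro J_pos) blast
  define Q where "Q u = \<phi> m * (g1 u - (t + m) * g0 u) - \<phi> (t + m) * (h1 u - m * h0 u)" for u
  have iQ: "integrable lborel Q" unfolding Q_def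
    using ig0 ig1 ih0 ih1 by (intro Bochner_Integration.integrable_diff integrable_mult_right)
  have IQ: "(\<integral>u. Q u \<partial>lborel) = \<phi> m * (M1 (W y) - (t + m) * M0 (W y)) - \<phi> (t + m) * (M1 (W x) - m * M0 (W x))"
    unfolding Q_def using ig0 ig1 ih0 ih1 by (simp add: Ig0 Ig1 Ih0 Ih1)
  have "M1 (W x) - m * M0 (W x) = 0" using posx by (simp add: m_def P_def)
  then have IQ': "(\<integral>u. Q u \<partial>lborel) = \<phi> m * (M1 (W y) - (t + m) * M0 (W y))" using IQ by simp
  have Qle: "Q u \<le> 0" for u
  proof -
    have "Q u = indicator (W x) u * ((u - m) * (\<phi> (t + u) * \<phi> m - \<phi> (t + m) * \<phi> u))"
      unfolding Q_def g0_def g1_def h0_def h1_def by (simp add: algebra_simps)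
    also have "\<dots> \<le> 0" using mlr[OF t, of u m] by (simp add: indicator_def)
    finally show "Q u \<le> 0" .
  qed
  have "(\<integral>u. Q u \<partial>lborel) \<le> lebesgue_integral lborel (\<lambda>u::real. 0::real)"
    using iQ Qle by (intro integral_mono) auto

  then have "(\<integral>u. Q u \<partial>lborel) \<le> 0" by simp
  then have "\<phi> m * (M1 (W y) - (t + m) * M0 (W y)) \<le> 0" using IQ' by simp
  then have "M1 (W y) - (t + m) * M0 (W y) \<le> 0" using phim by (simp add: mult_le_0_iff)
  then have "P y \<le> t + m" unfolding P_def using posy by (simp add: pos_divide_le_eq)
  then show ?thesis by (simp add: t_def m_def)
qed

lemma I_conv: "p \<in> I \<Longrightarrow> q \<in> I \<Longrightarrow> p \<le> z \<Longrightarrow> z \<le> q \<Longrightarrow> z \<in> I"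
  unfolding I_def by (auto intro: order.trans[of a "ereal p"] order.trans[of _ "ereal q" b])

lemma I_closed: "closed I"
  using I_cl unfolding I_def[symmetric] by (metis closed_closure)

lemma I_two: "\<exists>p q. p < q \<and> p \<in> I \<and> q \<in> I"
proof -
  obtain r1 where r1: "a < ereal r1" "ereal r1 < b" using ereal_dense2[OF ab] by auto
  obtain r2 where r2: "ereal r1 < ereal r2" "ereal r2 < b" using ereal_dense2[OF r1(2)] by auto
  have "r1 \<in> I" "r2 \<in> I" using r1 r2 order.strict_trans[OF r1(1) r2(1)] unfolding I_def by (auto simp: less_imp_le)
  then show ?thesis using r2 by auto
qed

lemma islimpt_I: assumes y: "y \<in> I" shows "y islimpt I"
proof -
  obtain p q where pq: "p < q" "p \<in> I" "q \<in> I" using I_two by blast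
  obtain z where z: "z \<in> I" "z \<noteq> y" using pq by (cases "p = y") auto
  define lo where "lo = min y z"
  define hi where "hi = max y z"
  have lh: "lo < hi" using z by (auto simp: lo_def hi_def min_def max_def)
  have sub: "{lo..hi} \<subseteq> I"
  proof
    fix w assume "w \<in> {lo..hi}"
    then show "w \<in> I"
      using y z by (cases "y \<le> z") (auto simp: lo_def hi_def intro: I_conv)
  qed
  have "y islimpt {lo..hi}" using lh by (simp add: lo_def hi_def)
  then show ?thesis using sub by (rule islimpt_subset)
qed

lemma Phi_P: "x \<in> I \<Longrightarrow> Phi \<mu> a b x = P x"
  using Phi_eq by (simp add: P_def)

lemma P_lip2: assumes "x \<in> I" "y \<in> I" "x < y" shows "2 * P y \<le> 2 * P x + (y - x)"
  using P_lip[OF assms] by (simp add: field_simps)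

lemma P_contr: assumes x: "x \<in> I" and y: "y \<in> I" shows "dist (P x) (P y) \<le> 1/2 * dist x y"
proof (cases x y rule: linorder_cases)
  case less
  then show ?thesis using P_mono[OF x y less] P_lip2[OF x y less] unfolding dist_real_def by (simp add: abs_if)
next
  case greater
  then show ?thesis using P_mono[OF y x greater] P_lip2[OF y x greater] unfolding dist_real_def by (simp add: abs_if)
qed simp

lemma D_form: "x \<in> I \<Longrightarrow> D x = 2 * M0 (W x) * (x - P x)"
  using M0_pos[of x] unfolding D_alt P_def by (simp add: algebra_simps)

lemma e_strict: assumes "x \<in> I" "y \<in> I" "x < y" shows "x - P x < y - P y"
  using P_lip2[OF assms] assms(3) by linarith

lemma main:
  "(\<forall>x\<in>I. (calG \<mu> a b has_real_derivative
         (LINT \<xi>:{\<xi>. (a + ereal x) / 2 < ereal \<xi> \<and> ereal \<xi> < (ereal x + b) / 2}|\<mu>. 2 * (x - \<xi>)))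
         (at x within I)) \<and>
     (\<exists>xs\<in>I.
        {y\<in>I. \<forall>z\<in>I. calG \<mu> a b y \<le> calG \<mu> a b z} = {xs} \<and>
        {y\<in>I. (calG \<mu> a b has_real_derivative 0) (at y within I)} = {xs} \<and>
        xs = Phi \<mu> a b xs \<and>
        (\<forall>x0\<in>I. (\<lambda>n. (Phi \<mu> a b ^^ n) x0) \<longlonglongrightarrow> xs))"
proof -
  let ?G = "calG \<mu> a b" and ?F = "Phi \<mu> a b"
  have Deq: "(LINT \<xi>:{\<xi>. (a + ereal x) / 2 < ereal \<xi> \<and> ereal \<xi> < (ereal x + b) / 2}|\<mu>. 2 * (x - \<xi>)) = D x" for x
    unfolding W_eq set_lebesgue_integral_def D_def by simp
  have deriv: "\<And>x. x \<in> I \<Longrightarrow> (?G has_real_derivative D x) (at x within I)" by (rule G_deriv)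
  have FI: "?F ` I \<subseteq> I" using Phi_P P_in_I by auto
  have "\<exists>!x\<in>I. ?F x = x"
  proof (rule Banach_fix)
    show "complete I" using I_closed by (simp add: complete_eq_closed)
    show "I \<noteq> {}" using I_two by auto
    show "dist (?F x) (?F y) \<le> 1/2 * dist x y" if "x \<in> I" "y \<in> I" for x y
      using that P_contr Phi_P by simp
  qed (use FI in auto)
  then have "\<exists>x. x \<in> I \<and> ?F x = x" by (rule ex1_implies_ex)
  then obtain xs where xs: "xs \<in> I" "?F xs = xs" by blast
  have Pxs: "P xs = xs" using xs Phi_P by simp
  have Dneg: "D x < 0" if "x \<in> I" "x < xs" for x
  proof -
    have "x - P x < 0" using e_strict[OF that(1) xs(1) that(2)] Pxs by simp
    moreover have "0 < 2 * M0 (W x)" using M0_pos[OF that(1)] by simp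
    ultimately have "2 * M0 (W x) * (x - P x) < 0" by (metis mult_pos_neg)
    then show ?thesis unfolding D_form[OF that(1)] .
  qed
  have Dpos: "0 < D x" if "x \<in> I" "xs < x" for x
  proof -
    have "0 < x - P x" using e_strict[OF xs(1) that(1) that(2)] Pxs by simp
    moreover have "0 < 2 * M0 (W x)" using M0_pos[OF that(1)] by simp
    ultimately have "0 < 2 * M0 (W x) * (x - P x)" by (metis mult_pos_pos)
    then show ?thesis unfolding D_form[OF that(1)] .
  qed
  have Dxs: "D xs = 0" unfolding D_form[OF xs(1)] Pxs by simp
  have hd: "\<And>z p q. p \<in> I \<Longrightarrow> q \<in> I \<Longrightarrow> z \<in> {p..q} \<Longrightarrow> (?G has_derivative (*) (D z)) (at z within {p..q})"
  proof -
    fix z p q assume pq: "p \<in> I" "q \<in> I" "z \<in> {p..q}"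
    have sub: "{p..q} \<subseteq> I"
    proof
      fix w assume "w \<in> {p..q}"
      then show "w \<in> I" using I_conv[OF pq(1) pq(2), of w] by simp
    qed
    have zI: "z \<in> I" using sub pq(3) by blast
    show "(?G has_derivative (*) (D z)) (at z within {p..q})"
      using deriv[OF zI] unfolding has_field_derivative_def by (rule has_derivative_subset[OF _ sub])
  qed
  have Gstrict: "?G xs < ?G y" if y: "y \<in> I" "y \<noteq> xs" for y
  proof (cases "xs < y")
    case True
    obtain z where z: "z \<in> {xs<..<y}" "?G y - ?G xs = D z * (y - xs)"
      using mvt_simple[OF True, of ?G "\<lambda>z. (*) (D z)"] hd[OF xs(1) y(1)] by auto
    have zI: "z \<in> I" using z(1) I_conv[OF xs(1) y(1), of z] by simp
    have "0 < D z" using Dpos[OF zI] z(1) by auto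
    moreover have "0 < y - xs" using True by simp
    ultimately have "0 < D z * (y - xs)" by (metis mult_pos_pos)
    then show ?thesis using z(2) by simp
  next
    case False
    then have lt: "y < xs" using y by auto
    obtain z where z: "z \<in> {y<..<xs}" "?G xs - ?G y = D z * (xs - y)"
      using mvt_simple[OF lt, of ?G "\<lambda>z. (*) (D z)"] hd[OF y(1) xs(1)] by auto
    have zI: "z \<in> I" using z(1) I_conv[OF y(1) xs(1), of z] by simp
    have "D z < 0" using Dneg[OF zI] z(1) by auto
    moreover have "0 < xs - y" using lt by simp
    ultimately have "D z * (xs - y) < 0" by (metis mult_neg_pos)
    then show ?thesis using z(2) by simp
  qed
  have argmin: "{y\<in>I. \<forall>z\<in>I. ?G y \<le> ?G z} = {xs}"
  proof (intro equalityI subsetI)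
    fix y assume "y \<in> {y\<in>I. \<forall>z\<in>I. ?G y \<le> ?G z}"
    then have y: "y \<in> I" "?G y \<le> ?G xs" using xs by auto
    then show "y \<in> {xs}" using Gstrict[of y] by (cases "y = xs") auto
  next
    fix y assume "y \<in> {xs}"
    then show "y \<in> {y\<in>I. \<forall>z\<in>I. ?G y \<le> ?G z}"
      using xs Gstrict by (auto intro: less_imp_le)
  qed
  have stat: "{y\<in>I. (?G has_real_derivative 0) (at y within I)} = {xs}"
  proof (intro equalityI subsetI)
    fix y assume "y \<in> {y\<in>I. (?G has_real_derivative 0) (at y within I)}"
    then have y: "y \<in> I" "(?G has_real_derivative 0) (at y within I)" by auto
    have nb: "at y within I \<noteq> bot" using islimpt_I[OF y(1)] by (simp add: trivial_limit_within)
    have "D y = 0" using has_field_derivative_unique[OF deriv[OF y(1)] y(2) nb] .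
    then show "y \<in> {xs}" using Dneg[OF y(1)] Dpos[OF y(1)] by (cases y xs rule: linorder_cases) auto
  next
    fix y assume "y \<in> {xs}"
    then show "y \<in> {y\<in>I. (?G has_real_derivative 0) (at y within I)}"
      using xs deriv[OF xs(1)] Dxs by auto
  qed
  have iter: "(?F ^^ n) x0 \<in> I \<and> \<bar>(?F ^^ n) x0 - xs\<bar> \<le> (1/2)^n * \<bar>x0 - xs\<bar>" if x0: "x0 \<in> I" for x0 n
  proof (induction n)
    case 0
    then show ?case using x0 by simp
  next
    case (Suc n)
    let ?z = "(?F ^^ n) x0"
    have zI: "?z \<in> I" using Suc by simp
    have "\<bar>?F ?z - xs\<bar> = dist (P ?z) (P xs)" using Phi_P[OF zI] Pxs by (simp add: dist_real_def)
    also have "\<dots> \<le> 1/2 * dist ?z xs" by (rule P_contr[OF zI xs(1)])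
    also have "\<dots> \<le> 1/2 * ((1/2)^n * \<bar>x0 - xs\<bar>)" using Suc by (simp add: dist_real_def)
    finally have "\<bar>?F ?z - xs\<bar> \<le> (1/2)^Suc n * \<bar>x0 - xs\<bar>" by simp
    moreover have "?F ?z \<in> I" using FI zI by auto
    ultimately show ?case by simp
  qed
  have conv: "(\<lambda>n. (?F ^^ n) x0) \<longlonglongrightarrow> xs" if x0: "x0 \<in> I" for x0
  proof -
    have "(\<lambda>n. (?F ^^ n) x0 - xs) \<longlonglongrightarrow> 0"
    proof (rule Lim_null_comparison)
      show "eventually (\<lambda>n. norm ((?F ^^ n) x0 - xs) \<le> (1/2)^n * \<bar>x0 - xs\<bar>) sequentially"
        using iter[OF x0] by simp
      have "(\<lambda>n. (1/2::real)^n) \<longlonglongrightarrow> 0" by (rule LIMSEQ_power_zero) simp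
      then show "(\<lambda>n. (1/2::real)^n * \<bar>x0 - xs\<bar>) \<longlonglongrightarrow> 0" by (rule tendsto_mult_left_zero)
    qed
    then show ?thesis by (simp add: LIM_zero_iff)
  qed
  show ?thesis
    unfolding Deq using deriv xs argmin stat conv by auto
qed

end

theorem propositionA1:
  fixes \<mu> :: "real measure" and \<phi> :: "real \<Rightarrow> real" and a b :: ereal
  assumes phi_meas: "\<phi> \<in> borel_measurable borel"
    and lc: "log_concave \<phi>"
    and mu_def: "\<mu> = density lborel (\<lambda>x. ennreal (\<phi> x))"
    and prob: "emeasure \<mu> (space \<mu>) = 1"
    and second_moment: "integrable \<mu> (\<lambda>x. x\<^sup>2)"
    and I_def: "closure {x. \<phi> x > 0} = {x. a \<le> ereal x \<and> ereal x \<le> b}"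
    and ab: "a < b"
  defines "I \<equiv> {x. a \<le> ereal x \<and> ereal x \<le> b}"
  shows
    "(\<forall>x\<in>I. (calG \<mu> a b has_real_derivative
         (LINT \<xi>:{\<xi>. (a + ereal x) / 2 < ereal \<xi> \<and> ereal \<xi> < (ereal x + b) / 2}|\<mu>. 2 * (x - \<xi>)))
         (at x within I)) \<and>
     (\<exists>xs\<in>I.
        {y\<in>I. \<forall>z\<in>I. calG \<mu> a b y \<le> calG \<mu> a b z} = {xs} \<and>
        {y\<in>I. (calG \<mu> a b has_real_derivative 0) (at y within I)} = {xs} \<and>
        xs = Phi \<mu> a b xs \<and>
        (\<forall>x0\<in>I. (\<lambda>n. (Phi \<mu> a b ^^ n) x0) \<longlonglongrightarrow> xs))"
proof -
  have Ieq: "I = {x. a \<le> ereal x \<and> ereal x \<le> b}" using assms by simp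
  have loc: "LC \<mu> \<phi> a b" by (rule LC.intro) fact+
  have LI: "LC.I a b = {x. a \<le> ereal x \<and> ereal x \<le> b}" by (rule LC.I_def[OF loc])
  show ?thesis using LC.main[OF loc, unfolded LI] unfolding Ieq .
qed

end
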